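(* Let $f:\mathbb R^n\to\mathbb R$ be a convex polynomial of degree $d$ such that $f(\mathbf x)=s(\mathbf x)+p(\mathbf x)$ for all $\mathbf x\in\mathbb R^n$, where $s$ is a separable polynomial (i.e., $s(\mathbf x)=\sum_{j=1}^n s_j(x_j)$ for univariate polynomials $s_j$) and $p$ is a polynomial consisting only of non-separable monomials (monomials involving at least two distinct variables). Then $\deg(s)\ge\deg(p)$. *)

theory Defs
  imports "HOL-Analysis.Analysis" "HOL-Computational_Algebra.Polynomial"
begin

text \<open>Multivariate real polynomials on real^'n are represented by their coefficient
  function on exponent vectors (alpha :: 'n => nat), with finite support.\<close>

definition mono_eval :: "('n::finite \<Rightarrow> nat) \<Rightarrow> real^'n \<Rightarrow> real" where
  "mono_eval \<alpha> x = (\<Prod>i\<in>UNIV. (x$i) ^ (\<alpha> i))"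

definition mpoly_eval :: "(('n::finite \<Rightarrow> nat) \<Rightarrow> real) \<Rightarrow> real^'n \<Rightarrow> real" where
  "mpoly_eval c x = (\<Sum>\<alpha>\<in>{\<alpha>. c \<alpha> \<noteq> 0}. c \<alpha> * mono_eval \<alpha> x)"

text \<open>Total degree; the zero polynomial gets degree 0 by convention.\<close>
definition total_degree :: "(('n::finite \<Rightarrow> nat) \<Rightarrow> real) \<Rightarrow> nat" where
  "total_degree c = Max (insert 0 {sum \<alpha> UNIV | \<alpha>. c \<alpha> \<noteq> 0})"

definition non_separable_mono :: "('n::finite \<Rightarrow> nat) \<Rightarrow> bool" where
  "non_separable_mono \<alpha> \<longleftrightarrow> card {i. \<alpha> i \<noteq> 0} \<ge> 2"

definition separable_eval :: "('n::finite \<Rightarrow> real poly) \<Rightarrow> real^'n \<Rightarrow> real" where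
  "separable_eval s x = (\<Sum>j\<in>UNIV. poly (s j) (x$j))"

definition separable_degree :: "('n::finite \<Rightarrow> real poly) \<Rightarrow> nat" where
  "separable_degree s = Max (range (\<lambda>j. degree (s j)))"

end

theory Submission imports Defs begin

lemma digits_bound:
  fixes a :: "nat \<Rightarrow> nat"
  assumes "\<forall>j<n. a j < B"
  shows "(\<Sum>j<n. a j * B^j) < B^n"
  using assms
proof (induction n)
  case 0 then show ?case by simp
next
  case (Suc n)
  have IH: "(\<Sum>j<n. a j * B^j) < B^n" using Suc by auto
  have an: "a n + 1 \<le> B" using Suc.prems by auto
  have "(\<Sum>j<Suc n. a j * B^j) = (\<Sum>j<n. a j * B^j) + a n * B^n" by simp
  also have "\<dots> < B^n + a n * B^n" using IH by simp
  also have "\<dots> = (a n + 1) * B^n" by simp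
  also have "\<dots> \<le> B * B^n" using an by (intro mult_right_mono) auto
  finally show ?case by simp
qed

lemma digits_inj:
  fixes a b :: "nat \<Rightarrow> nat"
  assumes "\<forall>j<n. a j < B" "\<forall>j<n. b j < B"
    and "(\<Sum>j<n. a j * B^j) = (\<Sum>j<n. b j * B^j)"
  shows "\<forall>j<n. a j = b j"
  using assms
proof (induction n)
  case 0 then show ?case by simp
next
  case (Suc n)
  have ba: "(\<Sum>j<n. a j * B^j) < B^n" using Suc.prems by (intro digits_bound) auto
  have bb: "(\<Sum>j<n. b j * B^j) < B^n" using Suc.prems by (intro digits_bound) auto
  have Bpos: "B^n > 0"
  proof (rule ccontr)
    assume "\<not> B^n > 0" then have "B^n = 0" by simp
    with ba show False by simp
  qed
  have eq: "(\<Sum>j<n. a j * B^j) + a n * B^n = (\<Sum>j<n. b j * B^j) + b n * B^n"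
    using Suc.prems(3) by simp
  have da: "((\<Sum>j<n. a j * B^j) + a n * B^n) div B^n = a n"
    using ba Bpos by (simp only: div_mult_self1 div_less)
  have db: "((\<Sum>j<n. b j * B^j) + b n * B^n) div B^n = b n"
    using bb Bpos by (simp only: div_mult_self1 div_less)
  have abn: "a n = b n" using da db eq by metis
  then have low: "(\<Sum>j<n. a j * B^j) = (\<Sum>j<n. b j * B^j)" using eq by (metis add_right_cancel)
  have "\<forall>j<n. a j = b j"
    by (rule Suc.IH) (use Suc.prems low in auto)
  then show ?case using abn less_Suc_eq by auto
qed

lemma mono_eval_scale:
  "mono_eval \<alpha> (t *\<^sub>R x) = t ^ (sum \<alpha> UNIV) * mono_eval \<alpha> x"
proof -
  have "mono_eval \<alpha> (t *\<^sub>R x) = (\<Prod>i\<in>UNIV. t ^ \<alpha> i * (x$i) ^ \<alpha> i)"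
    unfolding mono_eval_def by (simp add: power_mult_distrib)
  also have "\<dots> = (\<Prod>i\<in>UNIV. t ^ \<alpha> i) * mono_eval \<alpha> x"
    unfolding mono_eval_def by (rule prod.distrib)
  also have "(\<Prod>i\<in>UNIV. t ^ \<alpha> i) = t ^ (sum \<alpha> UNIV)"
    by (rule power_sum[symmetric])
  finally show ?thesis .
qed

lemma mpoly_eval_superset:
  assumes "finite A" "{\<alpha>. c \<alpha> \<noteq> 0} \<subseteq> A"
  shows "mpoly_eval c y = (\<Sum>\<alpha>\<in>A. c \<alpha> * mono_eval \<alpha> y)"
  unfolding mpoly_eval_def
  by (rule sum.mono_neutral_left) (use assms in auto)

lemma mpoly_identity:
  fixes c :: "('n::finite \<Rightarrow> nat) \<Rightarrow> real"
  assumes fin: "finite {\<alpha>. c \<alpha> \<noteq> 0}" and z: "\<forall>x. mpoly_eval c x = 0"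
  shows "c \<alpha> = 0"
proof (rule ccontr)
  assume cne: "c \<alpha> \<noteq> 0"
  define A where "A = {\<alpha>. c \<alpha> \<noteq> 0}"
  have finA: "finite A" using fin A_def by simp
  obtain g where g: "bij_betw g (UNIV::'n set) {0..<card (UNIV::'n set)}"
    using ex_bij_betw_finite_nat[of "UNIV::'n set"] by auto
  define n where "n = card (UNIV::'n set)"
  define h where "h = inv_into UNIV g"
  have h: "bij_betw h {0..<n} (UNIV::'n set)" using g unfolding h_def n_def by (rule bij_betw_inv_into)
  have gh: "g (h j) = j" if "j < n" for j
    using g that unfolding h_def n_def by (simp add: bij_betw_def f_inv_into_f)
  have hg: "h (g i) = i" for i
    using g unfolding h_def by (simp add: bij_betw_def)
  have gn: "g i < n" for i using g unfolding n_def bij_betw_def by auto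
  define B where "B = Suc (Max (insert 0 ((\<lambda>\<alpha>. sum \<alpha> UNIV) ` A)))"
  have digB: "\<beta> i < B" if "\<beta> \<in> A" for \<beta> i
  proof -
    have "\<beta> i \<le> sum \<beta> UNIV" by (rule member_le_sum) auto
    also have "\<dots> \<le> Max (insert 0 ((\<lambda>\<alpha>. sum \<alpha> UNIV) ` A))"
      using finA that by (intro Max_ge) auto
    finally show ?thesis unfolding B_def by simp
  qed
  define e where "e \<beta> = (\<Sum>i\<in>UNIV. \<beta> i * B ^ g i)" for \<beta> :: "'n \<Rightarrow> nat"
  have e_re: "e \<beta> = (\<Sum>j<n. \<beta> (h j) * B ^ j)" for \<beta>
  proof -
    have "(\<Sum>j\<in>{0..<n}. \<beta> (h j) * B ^ g (h j)) = e \<beta>"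
      unfolding e_def by (rule sum.reindex_bij_betw[OF h])
    moreover have "(\<Sum>j\<in>{0..<n}. \<beta> (h j) * B ^ g (h j)) = (\<Sum>j<n. \<beta> (h j) * B ^ j)"
      by (rule sum.cong) (auto simp: gh atLeast0LessThan)
    ultimately show ?thesis by simp
  qed
  have einj: "\<beta> = \<gamma>" if "\<beta> \<in> A" "\<gamma> \<in> A" "e \<beta> = e \<gamma>" for \<beta> \<gamma>
  proof
    fix i
    have "\<forall>j<n. \<beta> (h j) = \<gamma> (h j)"
      by (rule digits_inj[where B=B]) (use that digB e_re in auto)
    then show "\<beta> i = \<gamma> i" using gn[of i] hg[of i] by metis
  qed
  define X where "X T = (\<chi> i. T ^ (B ^ g i))" for T :: real
  have mX: "mono_eval \<beta> (X T) = T ^ e \<beta>" for \<beta> T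
  proof -
    have "mono_eval \<beta> (X T) = (\<Prod>i\<in>UNIV. T ^ (\<beta> i * B ^ g i))"
      unfolding mono_eval_def X_def
      by (intro prod.cong refl) (simp add: power_mult[symmetric] mult.commute)
    also have "\<dots> = T ^ e \<beta>" unfolding e_def by (rule power_sum[symmetric])
    finally show ?thesis .
  qed
  define K where "K = Max (e ` A)"
  define d where "d k = (\<Sum>\<beta>\<in>{\<beta>\<in>A. e \<beta> = k}. c \<beta>)" for k
  have "(\<Sum>k\<le>K. d k * T ^ k) = 0" for T
  proof -
    have "(\<Sum>k\<le>K. d k * T ^ k) = (\<Sum>k\<le>K. (\<Sum>\<beta>\<in>{\<beta>\<in>A. e \<beta> = k}. c \<beta> * T ^ e \<beta>))"
      unfolding d_def sum_distrib_right by (intro sum.cong refl) auto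
    also have "\<dots> = (\<Sum>\<beta>\<in>A. c \<beta> * T ^ e \<beta>)"
      by (rule sum.group) (use finA K_def in auto)
    also have "\<dots> = mpoly_eval c (X T)" unfolding mpoly_eval_def A_def mX ..
    finally show ?thesis using z by simp
  qed
  then have d0: "\<forall>k\<le>K. d k = 0" using polyfun_eq_0[of d K] by blast
  have aA: "\<alpha> \<in> A" using cne A_def by simp
  have "{\<beta>\<in>A. e \<beta> = e \<alpha>} = {\<alpha>}" using einj aA by auto
  then have "d (e \<alpha>) = c \<alpha>" unfolding d_def by simp
  moreover have "e \<alpha> \<le> K" unfolding K_def using finA aA by simp
  ultimately show False using d0 cne by simp
qed


lemma pw_lim:
  fixes k D :: nat
  assumes "k \<le> D"
  shows "((\<lambda>t::real. t^k / t^D) \<longlongrightarrow> (if k = D then 1 else 0)) at_top"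
proof (cases "k = D")
  case True
  have ev: "eventually (\<lambda>t::real. 1 = t^k / t^D) at_top"
    using eventually_gt_at_top[of "0::real"] by eventually_elim (simp add: True)
  have "((\<lambda>t::real. 1) \<longlongrightarrow> 1) at_top" by simp
  then have "((\<lambda>t::real. t^k / t^D) \<longlongrightarrow> 1) at_top" using tendsto_cong[OF ev] by blast
  then show ?thesis using True by simp
next
  case False
  have ev: "eventually (\<lambda>t::real. inverse (t^(D-k)) = t^k / t^D) at_top"
    using eventually_gt_at_top[of "0::real"]
  proof eventually_elim
    case (elim t)
    have "t^D = t^k * t^(D-k)" using assms by (simp add: power_add[symmetric])
    then show ?case using elim by (simp add: field_simps)
  qed
  have "((\<lambda>t::real. inverse (t^(D-k))) \<longlongrightarrow> 0) at_top"
    by (intro tendsto_inverse_0_at_top filterlim_pow_at_top filterlim_ident) (use False assms in auto)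
  then show ?thesis using False tendsto_cong[OF ev] by simp
qed

lemma scaled_limit:
  fixes s :: "'n::finite \<Rightarrow> real poly" and p :: "('n \<Rightarrow> nat) \<Rightarrow> real" and D :: nat
  assumes fin: "finite {\<alpha>. p \<alpha> \<noteq> 0}" and degs: "\<forall>j. degree (s j) < D"
    and degp: "\<forall>\<alpha>. p \<alpha> \<noteq> 0 \<longrightarrow> sum \<alpha> UNIV \<le> D"
  shows "((\<lambda>t. (separable_eval s (t *\<^sub>R y) + mpoly_eval p (t *\<^sub>R y)) / t^D)
          \<longlongrightarrow> mpoly_eval (\<lambda>\<alpha>. if sum \<alpha> UNIV = D then p \<alpha> else 0) y) at_top"
proof -
  let ?A = "{\<alpha>. p \<alpha> \<noteq> 0}"
  have eq: "(separable_eval s (t *\<^sub>R y) + mpoly_eval p (t *\<^sub>R y)) / t^D =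
     (\<Sum>j\<in>UNIV. \<Sum>i\<le>degree (s j). coeff (s j) i * (y$j)^i * (t^i/t^D))
     + (\<Sum>\<alpha>\<in>?A. p \<alpha> * mono_eval \<alpha> y * (t^(sum \<alpha> UNIV)/t^D))" for t
    unfolding separable_eval_def mpoly_eval_def poly_altdef mono_eval_scale
    by (simp add: add_divide_distrib sum_divide_distrib power_mult_distrib mult_ac)
  have lim: "((\<lambda>t. (\<Sum>j\<in>UNIV. \<Sum>i\<le>degree (s j). coeff (s j) i * (y$j)^i * (t^i/t^D))
     + (\<Sum>\<alpha>\<in>?A. p \<alpha> * mono_eval \<alpha> y * (t^(sum \<alpha> UNIV)/t^D)))
     \<longlongrightarrow> (\<Sum>j\<in>UNIV. \<Sum>i\<le>degree (s j). coeff (s j) i * (y$j)^i * (if i = D then 1 else 0))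
     + (\<Sum>\<alpha>\<in>?A. p \<alpha> * mono_eval \<alpha> y * (if sum \<alpha> UNIV = D then 1 else 0))) at_top"
  proof (intro tendsto_add tendsto_sum tendsto_mult_left pw_lim)
    fix j i assume "i \<in> {..degree (s j)}"
    then show "i \<le> D" using degs[rule_format, of j] by auto
  next
    fix \<alpha> assume "\<alpha> \<in> ?A"
    then show "sum \<alpha> UNIV \<le> D" using degp by auto
  qed
  have v1: "(\<Sum>j\<in>UNIV. \<Sum>i\<le>degree (s j). coeff (s j) i * (y$j)^i * (if i = D then 1 else 0)) = 0"
  proof (intro sum.neutral ballI)
    fix j i assume "i \<in> {..degree (s j)}"
    then have "i \<noteq> D" using degs[rule_format, of j] by auto
    then show "coeff (s j) i * (y$j)^i * (if i = D then 1 else 0) = 0" by simp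
  qed
  have v2: "(\<Sum>\<alpha>\<in>?A. p \<alpha> * mono_eval \<alpha> y * (if sum \<alpha> UNIV = D then 1 else 0))
      = mpoly_eval (\<lambda>\<alpha>. if sum \<alpha> UNIV = D then p \<alpha> else 0) y"
    by (subst mpoly_eval_superset[OF fin]) (auto intro!: sum.cong)
  show ?thesis using lim unfolding eq[symmetric] v1 v2 by simp
qed


theorem theorem3:
  fixes f :: "real^'n \<Rightarrow> real"
    and s :: "'n \<Rightarrow> real poly"
    and p :: "('n \<Rightarrow> nat) \<Rightarrow> real"
  assumes "convex_on UNIV f"
    and "finite {\<alpha>. p \<alpha> \<noteq> 0}"
    and "\<forall>\<alpha>. p \<alpha> \<noteq> 0 \<longrightarrow> non_separable_mono \<alpha>"
    and "\<forall>x. f x = separable_eval s x + mpoly_eval p x"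
  shows "total_degree p \<le> separable_degree s"
proof (rule ccontr)
  assume "\<not> ?thesis"
  then have Dgt: "separable_degree s < total_degree p" by simp
  define D where "D = total_degree p"
  let ?A = "{\<alpha>. p \<alpha> \<noteq> 0}"
  have fin: "finite ?A" using assms(2) .
  have Sim: "{sum \<alpha> UNIV | \<alpha>. p \<alpha> \<noteq> 0} = (\<lambda>\<alpha>. sum \<alpha> UNIV) ` ?A" by auto
  have finS: "finite (insert 0 {sum \<alpha> UNIV | \<alpha>. p \<alpha> \<noteq> 0})" unfolding Sim using fin by simp
  have degp: "\<forall>\<alpha>. p \<alpha> \<noteq> 0 \<longrightarrow> sum \<alpha> UNIV \<le> D"
    unfolding D_def total_degree_def using finS by (auto intro!: Max_ge)
  have degs: "\<forall>j. degree (s j) < D"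
  proof
    fix j
    have "degree (s j) \<le> separable_degree s"
      unfolding separable_degree_def by (rule Max_ge) auto
    then show "degree (s j) < D" using Dgt D_def by simp
  qed
  have "D \<in> insert 0 {sum \<alpha> UNIV | \<alpha>. p \<alpha> \<noteq> 0}"
    unfolding D_def total_degree_def using finS by (rule Max_in) simp
  moreover have "D \<noteq> 0" using Dgt D_def by simp
  ultimately obtain \<alpha>0 where a0: "p \<alpha>0 \<noteq> 0" "sum \<alpha>0 UNIV = D" by auto
  define q where "q \<alpha> = (if sum \<alpha> UNIV = D then p \<alpha> else 0)" for \<alpha>
  have finq: "finite {\<alpha>. q \<alpha> \<noteq> 0}" by (rule finite_subset[OF _ fin]) (auto simp: q_def)
  have lim: "((\<lambda>t. f (t *\<^sub>R y) / t^D) \<longlongrightarrow> mpoly_eval q y) at_top" for y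
    using scaled_limit[OF fin degs degp, of y] assms(4) unfolding q_def by simp
  have qaxis: "mpoly_eval q (c *\<^sub>R axis i 1) = 0" for c i
    unfolding mpoly_eval_def
  proof (intro sum.neutral ballI)
    fix \<alpha> assume "\<alpha> \<in> {\<alpha>. q \<alpha> \<noteq> 0}"
    then have "p \<alpha> \<noteq> 0" by (auto simp: q_def split: if_splits)
    then have ns: "card {j. \<alpha> j \<noteq> 0} \<ge> 2" using assms(3) non_separable_mono_def by blast
    have "\<exists>j. j \<noteq> i \<and> \<alpha> j \<noteq> 0"
    proof (rule ccontr)
      assume "\<not> ?thesis"
      then have "{j. \<alpha> j \<noteq> 0} \<subseteq> {i}" by auto
      then have "card {j. \<alpha> j \<noteq> 0} \<le> 1" using card_mono[of "{i}"] by fastforce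
      then show False using ns by simp
    qed
    then obtain j where j: "j \<noteq> i" "\<alpha> j \<noteq> 0" by blast
    have "mono_eval \<alpha> (c *\<^sub>R axis i 1) = 0"
      unfolding mono_eval_def
      by (rule prod_zero) (use j in \<open>auto simp: axis_def intro!: bexI[of _ j]\<close>)
    then show "q \<alpha> * mono_eval \<alpha> (c *\<^sub>R axis i 1) = 0" by simp
  qed
  define N where "N = real CARD('n)"
  have Npos: "N > 0" unfolding N_def by simp
  have qle: "mpoly_eval q x \<le> 0" for x
  proof -
    define Y where "Y i = (N * x$i) *\<^sub>R axis i (1::real)" for i
    have comb: "(\<Sum>i\<in>UNIV. (1/N) *\<^sub>R (t *\<^sub>R Y i)) = t *\<^sub>R x" for t
      using Npos by (simp add: vec_eq_iff Y_def axis_def if_distrib cong: if_cong)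
    have ev: "eventually (\<lambda>t. f (t *\<^sub>R x) / t^D \<le> (\<Sum>i\<in>UNIV. (1/N) * (f (t *\<^sub>R Y i) / t^D))) at_top"
      using eventually_gt_at_top[of "0::real"]
    proof eventually_elim
      case (elim t)
      have "f (t *\<^sub>R x) \<le> (\<Sum>i\<in>UNIV. (1/N) * f (t *\<^sub>R Y i))"
        using convex_on_sum[where S="UNIV::'n set" and C=UNIV and f=f and a="\<lambda>_. 1/N" and y="\<lambda>i. t *\<^sub>R Y i"] assms(1) comb Npos
        by (simp add: N_def)
      then have "f (t *\<^sub>R x) / t^D \<le> (\<Sum>i\<in>UNIV. (1/N) * f (t *\<^sub>R Y i)) / t^D"
        using elim by (intro divide_right_mono) auto
      then show ?case by (simp add: sum_divide_distrib)
    qed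
    have l2: "((\<lambda>t. \<Sum>i\<in>UNIV. (1/N) * (f (t *\<^sub>R Y i) / t^D)) \<longlongrightarrow> (\<Sum>i\<in>UNIV. (1/N) * mpoly_eval q (Y i))) at_top"
      by (intro tendsto_sum tendsto_mult_left lim)
    have "mpoly_eval q x \<le> (\<Sum>i\<in>UNIV. (1/N) * mpoly_eval q (Y i))"
      by (rule tendsto_le[OF trivial_limit_at_top_linorder l2 lim ev])
    also have "\<dots> = 0" unfolding Y_def qaxis by simp
    finally show ?thesis .
  qed
  have qsym: "0 \<le> mpoly_eval q x + mpoly_eval q (-x)" for x
  proof -
    have ev: "eventually (\<lambda>t. f 0 * (t^0 / t^D) \<le> (1/2) * (f (t *\<^sub>R x) / t^D) + (1/2) * (f (t *\<^sub>R (-x)) / t^D)) at_top"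
      using eventually_gt_at_top[of "0::real"]
    proof eventually_elim
      case (elim t)
      have "f ((1 - 1/2) *\<^sub>R (t *\<^sub>R x) + (1/2) *\<^sub>R (t *\<^sub>R (-x))) \<le> (1 - 1/2) * f (t *\<^sub>R x) + (1/2) * f (t *\<^sub>R (-x))"
        by (rule convex_onD[OF assms(1)]) auto
      then have "f 0 \<le> (1/2) * f (t *\<^sub>R x) + (1/2) * f (t *\<^sub>R (-x))"
        by (simp add: scaleR_right_diff_distrib)
      then have "f 0 / t^D \<le> ((1/2) * f (t *\<^sub>R x) + (1/2) * f (t *\<^sub>R (-x))) / t^D"
        using elim by (intro divide_right_mono) auto
      then show ?case by (simp add: add_divide_distrib)
    qed
    have l1: "((\<lambda>t. f 0 * (t^0 / t^D)) \<longlongrightarrow> f 0 * (if 0 = D then 1 else 0)) at_top"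
      by (intro tendsto_mult_left pw_lim) simp
    have l2: "((\<lambda>t. (1/2) * (f (t *\<^sub>R x) / t^D) + (1/2) * (f (t *\<^sub>R (-x)) / t^D)) \<longlongrightarrow> (1/2) * mpoly_eval q x + (1/2) * mpoly_eval q (-x)) at_top"
      by (intro tendsto_add tendsto_mult_left lim)
    have "f 0 * (if 0 = D then 1 else 0) \<le> (1/2) * mpoly_eval q x + (1/2) * mpoly_eval q (-x)"
      by (rule tendsto_le[OF trivial_limit_at_top_linorder l2 l1 ev])
    then show ?thesis using \<open>D \<noteq> 0\<close> by simp
  qed
  have q0: "mpoly_eval q x = 0" for x
  proof -
    have "mpoly_eval q (-(-x)) = 0" using qle[of "-x"] qle[of x] qsym[of "-x"] by simp
    then show ?thesis by simp
  qed
  have "q \<alpha>0 = 0" by (rule mpoly_identity[OF finq]) (use q0 in auto)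
  then show False using a0 unfolding q_def by simp
qed

end
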